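(* If $m$ is a positive even integer and $n$ is a positive odd integer, then \[ \sum_{k=1}^\infty\frac{\zeta(2k)}{k(2k+m)(2k+n)} = -\frac{m+n}{(mn)^2}+\frac{\ln(2\pi)}{mn}-\frac{i^m(m-1)!}{m-n}\frac{\zeta(m+1)}{(2\pi)^m} +\frac{1}{m-n}\left((m-1)!\sum_{j=1}^{m/2}\frac{(-1)^j\zeta(2j+1)}{(m-2j)!(2\pi)^{2j}}-(n-1)!\sum_{j=1}^{(n-1)/2}\frac{(-1)^j\zeta(2j+1)}{(n-2j)!(2\pi)^{2j}}\right). \]
   Context: $\zeta$ is the Riemann zeta function, $i$ is the imaginary unit, and empty sums equal $0$. *)

theory Defs
  imports "HOL-Analysis.Analysis"
begin

text \<open>Riemann zeta function, only needed at real arguments s > 1, where it is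
  given by its Dirichlet series sum over n >= 1 of n powr (-s).\<close>
definition zeta :: "real \<Rightarrow> real" where
  "zeta s = (\<Sum>n. 1 / (real (Suc n)) powr s)"

end

theory Submission
  imports Defs "HOL-Real_Asymp.Real_Asymp"
begin

lemma nonneg_sums_swap:
  fixes f :: "nat \<Rightarrow> nat \<Rightarrow> real"
  assumes nn: "\<And>j k. f j k \<ge> 0" and g: "\<And>j. (\<lambda>k. f j k) sums g j" and G: "g sums G"
    and h: "\<And>k. (\<lambda>j. f j k) sums h k"
  shows "h sums G"
proof -
  have g': "((\<lambda>k. f j k) has_sum g j) UNIV" for j
    by (rule sums_nonneg_imp_has_sum[OF g nn])
  have gnn: "g j \<ge> 0" for j by (rule sums_le[OF _ sums_zero g[of j]]) (simp add: nn)
  have G': "(g has_sum G) UNIV" by (rule sums_nonneg_imp_has_sum[OF G gnn])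
  have h': "((\<lambda>j. f j k) has_sum h k) UNIV" for k
    by (rule sums_nonneg_imp_has_sum[OF h nn])
  have S: "(\<lambda>(j,k). f j k) summable_on Sigma UNIV (\<lambda>_. UNIV)"
    by (rule summable_on_SigmaI[where g=g]) (use g' G' nn in \<open>auto simp: summable_on_def\<close>)
  have "((\<lambda>(j,k). f j k) has_sum G) (UNIV \<times> UNIV)"
    by (rule has_sum_SigmaI[where g=g]) (use g' G' S in auto)
  hence "((\<lambda>(k,j). f j k) has_sum G) (UNIV \<times> UNIV)"
    by (subst (asm) has_sum_swap) simp
  hence "(h has_sum G) UNIV"
    by (rule has_sum_SigmaD) (use h' in auto)
  thus ?thesis by (rule has_sum_imp_sums)
qed

lemma zeta_sums:
  assumes "q \<ge> 2"
  shows "(\<lambda>n. 1 / real (Suc n) ^ q) sums zeta (real q)"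
proof -
  have "summable (\<lambda>n. inverse (real n ^ q))" by (rule inverse_power_summable) (use assms in auto)
  hence "summable (\<lambda>n. inverse (real (Suc n) ^ q))" by (subst summable_Suc_iff)
  hence s: "summable (\<lambda>n. 1 / real (Suc n) ^ q)" by (simp add: divide_inverse)
  have "zeta (real q) = (\<Sum>n. 1 / real (Suc n) ^ q)"
    unfolding zeta_def by (simp add: powr_realpow)
  with s show ?thesis by (simp add: sums_iff)
qed

lemma neg_ln_series:
  fixes u :: real assumes "0 \<le> u" "u < 1"
  shows "(\<lambda>k. u ^ Suc k / real (Suc k)) sums (- ln (1 - u))"
proof -
  have "(\<lambda>n. - ((- (-u)) ^ n) / real n) sums ln (1 + (-u))"
    by (rule ln_series') (use assms in auto)
  hence "(\<lambda>n. - (u ^ n / real n)) sums ln (1 - u)" by simp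
  hence "(\<lambda>n. u ^ n / real n) sums (- ln (1 - u))"
    using sums_minus by fastforce
  hence "(\<lambda>n. u ^ Suc n / real (Suc n)) sums (- ln (1 - u) + 0)"
    by (subst sums_Suc_iff) simp
  thus ?thesis by simp
qed

lemma log_sin_series:
  fixes t :: real assumes t: "0 < t" "t < 1"
  shows "(\<lambda>k. zeta (2 * real (Suc k)) * t ^ (2 * Suc k) / real (Suc k))
           sums (ln (pi * t) - ln (sin (pi * t)))"
proof -
  define P where "P n = (\<Prod>k=1..n. 1 - t^2 / real k ^ 2)" for n
  have lim: "P \<longlonglongrightarrow> sin (pi * t) / (pi * t)"
    unfolding P_def by (rule sin_product_formula_real') (use t in auto)
  have fpos: "1 - t^2 / real k ^ 2 > 0" if "k \<ge> 1" for k
  proof -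
    have "t^2 < 1" using t by (simp add: power_less_one_iff abs_less_iff)
    also have "1 \<le> real k ^ 2" using that by simp
    finally have "t^2 < real k ^ 2" .
    moreover have "real k ^ 2 > 0" using that by simp
    ultimately show ?thesis by (simp add: divide_less_eq)
  qed
  have sinpos: "sin (pi * t) > 0" using t by (intro sin_gt_zero) auto
  hence lpos: "sin (pi * t) / (pi * t) > 0" using t by simp
  have "(\<lambda>n. ln (P n)) \<longlonglongrightarrow> ln (sin (pi * t) / (pi * t))"
    by (rule tendsto_ln[OF lim]) (use lpos sinpos t in simp)
  moreover have "ln (P n) = (\<Sum>j<n. ln (1 - t^2 / real (Suc j) ^ 2))" for n
  proof -
    have "ln (P n) = (\<Sum>k=1..n. ln (1 - t^2 / real k ^ 2))"
      unfolding P_def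
    proof (rule ln_prod)
      fix i assume "i \<in> {1..n}"
      hence "1 - t^2 / real i ^ 2 > 0" by (intro fpos) auto
      thus "1 - t^2 / real i ^ 2 \<noteq> 0" by linarith
    qed auto
    also have "\<dots> = (\<Sum>j<n. ln (1 - t^2 / real (Suc j) ^ 2))"
      by (induction n) auto
    finally show ?thesis .
  qed
  ultimately have "(\<lambda>j. ln (1 - t^2 / real (Suc j) ^ 2)) sums ln (sin (pi * t) / (pi * t))"
    by (simp add: sums_def)
  hence "(\<lambda>j. - ln (1 - t^2 / real (Suc j) ^ 2)) sums (- ln (sin (pi * t) / (pi * t)))"
    by (rule sums_minus)
  also have "- ln (sin (pi * t) / (pi * t)) = ln (pi * t) - ln (sin (pi * t))"
    using sinpos t by (subst ln_div) auto
  finally have G: "(\<lambda>j. - ln (1 - t^2 / real (Suc j) ^ 2)) sums (ln (pi * t) - ln (sin (pi * t)))" .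
  define f where "f j k = (t^2 / real (Suc j) ^ 2) ^ Suc k / real (Suc k)" for j k
  have u: "0 \<le> t^2 / real (Suc j) ^ 2" "t^2 / real (Suc j) ^ 2 < 1" for j
    using fpos[of "Suc j"] by auto
  show ?thesis
  proof (rule nonneg_sums_swap[where f = f, OF _ _ G])
    show "0 \<le> f j k" for j k unfolding f_def using u by auto
    show "(\<lambda>k. f j k) sums - ln (1 - t^2 / real (Suc j) ^ 2)" for j
      unfolding f_def by (rule neg_ln_series[OF u])
    show "(\<lambda>j. f j k) sums (zeta (2 * real (Suc k)) * t ^ (2 * Suc k) / real (Suc k))" for k
    proof -
      have "(\<lambda>n. 1 / real (Suc n) ^ (2 * Suc k)) sums zeta (real (2 * Suc k))"
        by (rule zeta_sums) simp
      hence "(\<lambda>n. t ^ (2 * Suc k) / real (Suc k) * (1 / real (Suc n) ^ (2 * Suc k))) sums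
               (t ^ (2 * Suc k) / real (Suc k) * zeta (real (2 * Suc k)))"
        by (rule sums_mult)
      moreover have "f j k = t ^ (2 * Suc k) / real (Suc k) * (1 / real (Suc j) ^ (2 * Suc k))" for j
        unfolding f_def by (simp add: power_divide power_mult power2_eq_square power_mult_distrib mult_ac)
      ultimately show ?thesis by (simp add: mult_ac)
    qed
  qed
qed

lemma power_has_integral01: "((\<lambda>t::real. t ^ p) has_integral (1 / real (Suc p))) {0..1}"
proof -
  have "((\<lambda>t::real. t ^ p) has_integral (1 ^ Suc p / real (Suc p) - 0 ^ Suc p / real (Suc p))) {0..1}"
  proof (rule fundamental_theorem_of_calculus)
    fix x :: real
    have "((\<lambda>t. t ^ Suc p / real (Suc p)) has_real_derivative (real (Suc p) * x ^ (Suc p - Suc 0) / real (Suc p))) (at x)"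
      by (intro DERIV_cdivide DERIV_pow)
    hence "((\<lambda>t. t ^ Suc p / real (Suc p)) has_real_derivative x ^ p) (at x)"
      by (simp del: of_nat_Suc)
    thus "((\<lambda>t. t ^ Suc p / real (Suc p)) has_vector_derivative x ^ p) (at x within {0..1})"
      by (simp add: has_real_derivative_iff_has_vector_derivative has_vector_derivative_at_within)
  qed simp
  thus ?thesis by simp
qed

lemma xlnx_tendsto: "((\<lambda>x::real. x * ln x) \<longlongrightarrow> 0) (at_right 0)"
  by real_asymp

lemma pow_ln_has_integral01:
  "((\<lambda>t::real. t ^ b * ln t) has_integral (- 1 / real (Suc b) ^ 2)) {0..1}"
proof -
  define F where "F t = t ^ Suc b * ln t / real (Suc b) - t ^ Suc b / real (Suc b) ^ 2" for t :: real
  have Feq: "F = (\<lambda>t. t ^ b * (t * ln t) / real (Suc b) - t ^ Suc b / real (Suc b) ^ 2)"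
    unfolding F_def by (auto simp: mult_ac)
  have cont: "continuous_on {0..1} F"
  proof (rule continuous_on_IccI)
    have "((\<lambda>t. t ^ b * (t * ln t) / real (Suc b) - t ^ Suc b / real (Suc b) ^ 2) \<longlongrightarrow>
            0 ^ b * 0 / real (Suc b) - 0 ^ Suc b / real (Suc b) ^ 2) (at_right 0)"
      by (intro tendsto_intros xlnx_tendsto) auto
    thus "(F \<longlongrightarrow> F 0) (at_right 0)" unfolding Feq by simp
    show "(F \<longlongrightarrow> F 1) (at_left 1)" unfolding F_def
      by (intro tendsto_intros) auto
    show "F \<midarrow>x\<rightarrow> F x" if "0 < x" "x < 1" for x
      unfolding F_def using that by (intro tendsto_intros) auto
  qed simp
  have der: "(F has_vector_derivative (x ^ b * ln x)) (at x)" if "x \<in> {0<..<1}" for x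
  proof -
    have x: "0 < x" using that by simp
    have d1: "((\<lambda>t. t ^ Suc b) has_real_derivative real (Suc b) * x ^ b) (at x)"
      using DERIV_pow[of "Suc b" x] by simp
    have d2: "(ln has_real_derivative inverse x) (at x)" using DERIV_ln[OF x] .
    have d3: "((\<lambda>t. t ^ Suc b * ln t) has_real_derivative (real (Suc b) * x ^ b * ln x + x ^ Suc b * inverse x)) (at x)"
      using DERIV_mult[OF d1 d2] by (simp add: mult_ac)
    have "(F has_real_derivative
        ((real (Suc b) * x ^ b * ln x + x ^ Suc b * inverse x) / real (Suc b)
         - real (Suc b) * x ^ b / real (Suc b) ^ 2)) (at x)"
      unfolding F_def by (intro DERIV_diff DERIV_cdivide d1 d3)
    moreover have "(real (Suc b) * x ^ b * ln x + x ^ Suc b * inverse x) / real (Suc b)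
         - real (Suc b) * x ^ b / real (Suc b) ^ 2 = x ^ b * ln x"
    proof -
      have "x ^ Suc b * inverse x = x ^ b" using x by simp
      moreover have "real (Suc b) * x ^ b / real (Suc b) ^ 2 = x ^ b / real (Suc b)"
        by (simp add: power2_eq_square del: of_nat_Suc)
      ultimately show ?thesis using x by (simp add: field_simps power2_eq_square del: of_nat_Suc)
    qed
    ultimately show ?thesis by (simp add: has_real_derivative_iff_has_vector_derivative)
  qed
  have "((\<lambda>t::real. t ^ b * ln t) has_integral (F 1 - F 0)) {0..1}"
    by (rule fundamental_theorem_of_calculus_interior[OF _ cont]) (use der in auto)
  moreover have "F 1 - F 0 = - 1 / real (Suc b) ^ 2" unfolding F_def by simp
  ultimately show ?thesis by simp
qed

lemma zeta_nonneg: "q \<ge> 2 \<Longrightarrow> zeta (real q) \<ge> 0"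
  by (rule sums_le[OF _ sums_zero zeta_sums]) auto

lemma zeta_le_zeta2: "q \<ge> 2 \<Longrightarrow> zeta (real q) \<le> zeta 2"
proof -
  assume q: "q \<ge> 2"
  have "1 / real (Suc n) ^ q \<le> 1 / real (Suc n) ^ 2" for n
  proof -
    have "real (Suc n) ^ 2 \<le> real (Suc n) ^ q" by (rule power_increasing) (use q in auto)
    thus ?thesis by (intro divide_left_mono) auto
  qed
  from sums_le[OF _ zeta_sums[OF q] zeta_sums[of 2]] this show ?thesis by simp
qed

lemma F_series:
  fixes b :: nat
  defines "g \<equiv> (\<lambda>t::real. t ^ b * (ln (pi * t) - ln (sin (pi * t))))"
  shows "g integrable_on {0..1}"
    and "(\<lambda>k. zeta (2 * real (Suc k)) / (real (Suc k) * (2 * real (Suc k) + real (Suc b))))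
           sums integral {0..1} g"
proof -
  define c where "c k = zeta (2 * real (Suc k)) / real (Suc k)" for k
  define d where "d k = zeta (2 * real (Suc k)) / (real (Suc k) * (2 * real (Suc k) + real (Suc b)))" for k
  define f where "f N t = (\<Sum>k<N. c k * t ^ (2 * Suc k + b))" for N and t :: real
  have zq: "zeta (2 * real (Suc k)) = zeta (real (2 * Suc k))" for k by simp
  have cnn: "c k \<ge> 0" for k unfolding c_def zq by (intro divide_nonneg_nonneg zeta_nonneg) auto
  have dnn: "d k \<ge> 0" for k unfolding d_def zq by (intro divide_nonneg_nonneg zeta_nonneg) auto
  have dle: "d k \<le> zeta 2 * (1 / real (Suc k) ^ 2)" for k
  proof -
    have "d k \<le> zeta (real (2 * Suc k)) / (real (Suc k) * real (Suc k))"
      unfolding d_def zq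
      by (intro divide_left_mono zeta_nonneg mult_left_mono) auto
    also have "\<dots> \<le> zeta 2 / (real (Suc k) * real (Suc k))"
      by (intro divide_right_mono zeta_le_zeta2) auto
    finally show ?thesis by (simp add: power2_eq_square)
  qed
  have "summable d"
    by (rule summable_comparison_test[OF _ summable_mult[OF sums_summable[OF zeta_sums[of 2]]]])
       (use dnn dle in auto)
  hence dsum: "d sums suminf d" by (simp add: summable_sums)
  have fint: "(f N has_integral (\<Sum>k<N. d k)) {0<..<1}" for N
  proof -
    have "((\<lambda>t. \<Sum>k<N. c k * t ^ (2 * Suc k + b)) has_integral (\<Sum>k<N. c k * (1 / real (Suc (2 * Suc k + b))))) {0..1}"
      by (intro has_integral_sum has_integral_mult_right power_has_integral01) auto
    moreover have "c k * (1 / real (Suc (2 * Suc k + b))) = d k" for k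
      unfolding c_def d_def by (simp add: field_simps)
    ultimately show ?thesis unfolding f_def by (simp add: has_integral_Icc_iff_Ioo)
  qed
  have mono: "f N t \<le> f (Suc N) t" if "t \<in> {0<..<1}" for N t
    unfolding f_def using that cnn by (simp add: mult_nonneg_nonneg)
  have lim: "(\<lambda>N. f N t) \<longlonglongrightarrow> g t" if "t \<in> {0<..<1}" for t
  proof -
    have "(\<lambda>k. t ^ b * (zeta (2 * real (Suc k)) * t ^ (2 * Suc k) / real (Suc k)))
           sums (t ^ b * (ln (pi * t) - ln (sin (pi * t))))"
      by (rule sums_mult[OF log_sin_series]) (use that in auto)
    moreover have "t ^ b * (zeta (2 * real (Suc k)) * t ^ (2 * Suc k) / real (Suc k)) =
                   c k * t ^ (2 * Suc k + b)" for k
      unfolding c_def by (simp add: power_add field_simps)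
    ultimately show ?thesis unfolding f_def g_def sums_def by simp
  qed
  have bnd: "bounded (range (\<lambda>N. integral {0<..<1} (f N)))"
  proof -
    have "(\<lambda>N. integral {0<..<1} (f N)) = (\<lambda>N. \<Sum>k<N. d k)"
      using fint by (auto intro!: ext integral_unique)
    moreover have "(\<lambda>N. \<Sum>k<N. d k) \<longlonglongrightarrow> suminf d" using dsum by (simp add: sums_def)
    ultimately show ?thesis by (metis convergent_imp_bounded)
  qed
  have mc: "g integrable_on {0<..<1} \<and> (\<lambda>N. integral {0<..<1} (f N)) \<longlonglongrightarrow> integral {0<..<1} g"
    by (rule monotone_convergence_increasing[OF _ mono lim bnd]) (use fint in blast)+
  thus "g integrable_on {0..1}" by (simp add: integrable_on_open_interval_real)
  have "(\<lambda>N. integral {0<..<1} (f N)) = (\<lambda>N. \<Sum>k<N. d k)"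
    using fint by (auto intro!: ext integral_unique)
  with mc have "(\<lambda>N. \<Sum>k<N. d k) \<longlonglongrightarrow> integral {0..1} g"
    by (simp add: integral_open_interval_real)
  thus "(\<lambda>k. zeta (2 * real (Suc k)) / (real (Suc k) * (2 * real (Suc k) + real (Suc b))))
           sums integral {0..1} g" unfolding sums_def d_def by simp
qed

definition ecoef :: "nat \<Rightarrow> nat \<Rightarrow> real" where
  "ecoef b j = (-1) ^ (j - 1) * fact b / fact (b + 1 - 2 * j)"

definition Icl :: "nat \<Rightarrow> real \<Rightarrow> real" where
  "Icl b w = (\<Sum>j<b div 2. ecoef b (Suc j) / w ^ (2 * Suc j))"

lemma Icl_rec: "Icl (Suc (Suc c)) w = real (c + 2) / w^2 - real (c + 2) * real (c + 1) / w^2 * Icl c w"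
proof -
  have "Icl (Suc (Suc c)) w = (\<Sum>j<Suc (c div 2). ecoef (c+2) (Suc j) / w ^ (2 * Suc j))"
    unfolding Icl_def by simp
  also have "\<dots> = ecoef (c+2) 1 / w^2 + (\<Sum>j<c div 2. ecoef (c+2) (Suc (Suc j)) / w ^ (2 * Suc (Suc j)))"
    by (subst sum.lessThan_Suc_shift) simp
  also have "ecoef (c+2) 1 = real (c+2)"
    unfolding ecoef_def by (simp add: fact_Suc)
  also have "(\<Sum>j<c div 2. ecoef (c+2) (Suc (Suc j)) / w ^ (2 * Suc (Suc j))) =
             (\<Sum>j<c div 2. - (real (c + 2) * real (c + 1) / w^2) * (ecoef c (Suc j) / w ^ (2 * Suc j)))"
  proof (intro sum.cong refl)
    fix j assume "j \<in> {..<c div 2}"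
    hence j: "2 * Suc j \<le> c" by auto
    have f1: "fact (c + 2 + 1 - 2 * Suc (Suc j)) = (fact (c + 1 - 2 * Suc j) :: real)"
      using j by (simp add: numeral_2_eq_2)
    have f2: "(fact (c + 2) :: real) = real (c+2) * real (c+1) * fact c"
      by (simp add: fact_Suc numeral_2_eq_2 algebra_simps)
    have eq: "ecoef (c+2) (Suc (Suc j)) = - (real (c + 2) * real (c + 1)) * ecoef c (Suc j)"
      unfolding ecoef_def f1 f2 by simp
    have pw: "w ^ (2 * Suc (Suc j)) = w^2 * w ^ (2 * Suc j)"
      by (simp add: power_add[symmetric])
    show "ecoef (c+2) (Suc (Suc j)) / w ^ (2 * Suc (Suc j)) =
          - (real (c + 2) * real (c + 1) / w^2) * (ecoef c (Suc j) / w ^ (2 * Suc j))"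
      unfolding eq pw by (simp add: times_divide_times_eq)
  qed
  also have "\<dots> = - (real (c + 2) * real (c + 1) / w^2) * Icl c w"
    unfolding Icl_def by (simp add: sum_distrib_left)
  finally show ?thesis by simp
qed

lemma sin_2pik: "sin (2 * pi * real k) = 0" using sin_2npi[of k] by (simp add: mult_ac)
lemma cos_2pik: "cos (2 * pi * real k) = 1" using cos_2npi[of k] by (simp add: mult_ac)

lemma FTC01:
  fixes F f :: "real \<Rightarrow> real"
  assumes "\<And>x. (F has_real_derivative f x) (at x)"
  shows "(f has_integral (F 1 - F 0)) {0..1}"
  by (rule fundamental_theorem_of_calculus)
     (use assms in \<open>auto simp: has_real_derivative_iff_has_vector_derivative[symmetric] intro: has_field_derivative_at_within\<close>)

lemma alg2:
  fixes w x S C :: real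
  assumes "w \<noteq> 0"
  shows "(1 * S + (C * w) * x) / w + (- S * w) / w^2 = x ^ 1 * C"
  using assms by (simp add: field_simps power2_eq_square)

lemma alg6:
  fixes w a1 a2 x1 x2 S C P :: real
  assumes "w \<noteq> 0"
  shows "((a2 * x1) * S + (C * w) * x2) / w + (a2 * ((a1 * P) * C + (- S * w) * x1)) / w^2
         = x2 * C + a2 * a1 / w^2 * (P * C)"
  using assms by (simp add: field_simps power2_eq_square)

lemma cos_int_gen:
  fixes w :: real
  assumes w0: "w \<noteq> 0" and sw: "sin w = 0" and cw: "cos w = 1"
  shows "((\<lambda>t. t ^ b * cos (w * t)) has_integral Icl b w) {0..1}"
proof (induction b rule: less_induct)
  case (less b)
  consider "b = 0" | "b = 1" | c where "b = Suc (Suc c)"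
    by (metis One_nat_def not0_implies_Suc)
  then show ?case
  proof cases
    case 1
    have "((\<lambda>t. t ^ 0 * cos (w * t)) has_integral ((\<lambda>t. sin (w * t) / w) 1 - (\<lambda>t. sin (w * t) / w) 0)) {0..1}"
    proof (rule FTC01)
      fix x :: real
      have "((\<lambda>t. sin (w * t) / w) has_real_derivative cos (w * x) * w / w) (at x)"
        by (auto intro!: derivative_eq_intros)
      thus "((\<lambda>t. sin (w * t) / w) has_real_derivative x ^ 0 * cos (w * x)) (at x)"
        using w0 by simp
    qed
    thus ?thesis using 1 sw unfolding Icl_def by simp
  next
    case 2
    define F where "F t = t * sin (w * t) / w + cos (w * t) / w^2" for t
    have "((\<lambda>t. t ^ 1 * cos (w * t)) has_integral (F 1 - F 0)) {0..1}"
    proof (rule FTC01)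
      fix x :: real
      have "(F has_real_derivative (1 * sin (w * x) + (cos (w * x) * w) * x) / w + (- sin (w * x) * w) / w^2) (at x)"
        unfolding F_def
        by (intro DERIV_add DERIV_cdivide DERIV_mult DERIV_ident)
           (auto intro!: derivative_eq_intros)
      moreover have "(1 * sin (w * x) + (cos (w * x) * w) * x) / w + (- sin (w * x) * w) / w^2 = x ^ 1 * cos (w * x)"
        using alg2[OF w0] by simp
      ultimately show "(F has_real_derivative x ^ 1 * cos (w * x)) (at x)" by simp
    qed
    moreover have "F 1 - F 0 = 0" unfolding F_def using sw cw by simp
    ultimately show ?thesis using 2 unfolding Icl_def by simp
  next
    case 3
    define F where "F t = t ^ (c+2) * sin (w * t) / w + real (c+2) * (t ^ (c+1) * cos (w * t)) / w^2" for t
    have I1: "((\<lambda>t. t ^ (c+2) * cos (w * t) + real (c+2) * real (c+1) / w^2 * (t ^ c * cos (w * t)))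
            has_integral (F 1 - F 0)) {0..1}"
    proof (rule FTC01)
      fix x :: real
      have p2: "((\<lambda>t. t^(c+2)) has_real_derivative real (c+2) * x^(c+1)) (at x)"
        using DERIV_pow[of "c+2" x] by simp
      have p1: "((\<lambda>t. t^(c+1)) has_real_derivative real (c+1) * x^c) (at x)"
        using DERIV_pow[of "c+1" x] by simp
      have sd: "((\<lambda>t. sin (w * t)) has_real_derivative cos (w * x) * w) (at x)"
        by (auto intro!: derivative_eq_intros)
      have cd: "((\<lambda>t. cos (w * t)) has_real_derivative - sin (w * x) * w) (at x)"
        by (auto intro!: derivative_eq_intros)
      have D: "(F has_real_derivative
          ((real (c+2) * x^(c+1)) * sin (w * x) + (cos (w * x) * w) * x^(c+2)) / w
          + (real (c+2) * ((real (c+1) * x^c) * cos (w * x) + (- sin (w * x) * w) * x^(c+1))) / w^2) (at x)"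
        unfolding F_def
        by (intro DERIV_add DERIV_cdivide DERIV_mult DERIV_cmult p1 p2 sd cd)
      have E: "((real (c+2) * x^(c+1)) * sin (w * x) + (cos (w * x) * w) * x^(c+2)) / w
          + (real (c+2) * ((real (c+1) * x^c) * cos (w * x) + (- sin (w * x) * w) * x^(c+1))) / w^2
          = x ^ (c+2) * cos (w * x) + real (c+2) * real (c+1) / w^2 * (x ^ c * cos (w * x))"
        using alg6[OF w0] .
      show "(F has_real_derivative x ^ (c+2) * cos (w * x) + real (c+2) * real (c+1) / w^2 * (x ^ c * cos (w * x))) (at x)"
        using D unfolding E .
    qed
    have F10: "F 1 - F 0 = real (c+2) / w^2" unfolding F_def using sw cw by simp
    have I2: "((\<lambda>t. real (c+2) * real (c+1) / w^2 * (t ^ c * cos (w * t)))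
            has_integral (real (c+2) * real (c+1) / w^2 * Icl c w)) {0..1}"
      using less[of c] 3 by (intro has_integral_mult_right) auto
    have "((\<lambda>t. t ^ (c+2) * cos (w * t)) has_integral
        (real (c+2) / w^2 - real (c+2) * real (c+1) / w^2 * Icl c w)) {0..1}"
      using has_integral_diff[OF I1 I2] unfolding F10 by simp
    thus ?thesis using 3 Icl_rec[of c w] by simp
  qed
qed

lemma cos_int:
  assumes k: "k \<ge> 1"
  shows "((\<lambda>t. t ^ b * cos (2 * pi * real k * t)) has_integral Icl b (2 * pi * real k)) {0..1}"
  by (rule cos_int_gen) (use k sin_2pik cos_2pik in auto)

lemma abel_lim:
  fixes a :: "nat \<Rightarrow> real" and r :: "nat \<Rightarrow> real"
  assumes sa: "summable (\<lambda>k. \<bar>a k\<bar>)" and r1: "r \<longlonglongrightarrow> 1"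
    and r0: "\<And>N. 0 \<le> r N" and rle: "\<And>N. r N \<le> 1"
  shows "(\<lambda>N. \<Sum>k. r N ^ Suc k * a k) \<longlonglongrightarrow> (\<Sum>k. a k)"
proof -
  define S where "S x = (\<Sum>k. x ^ Suc k * a k)" for x :: real
  have ul: "uniform_limit {0..1} (\<lambda>n x. \<Sum>k<n. x ^ Suc k * a k) S sequentially"
    unfolding S_def
  proof (rule Weierstrass_m_test[OF _ sa])
    fix n and x :: real assume x: "x \<in> {0..1}"
    have x0: "0 \<le> x" "x \<le> 1" using x by auto
    have "\<bar>x ^ Suc n\<bar> \<le> 1" using power_le_one[OF x0, of "Suc n"] x0 by simp
    hence "\<bar>x ^ Suc n\<bar> * \<bar>a n\<bar> \<le> 1 * \<bar>a n\<bar>" by (intro mult_right_mono) auto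
    thus "norm (x ^ Suc n * a n) \<le> \<bar>a n\<bar>" by (simp add: abs_mult)
  qed
  have "continuous_on {0..1} S"
    by (rule uniform_limit_theorem[OF _ ul]) (auto intro!: always_eventually continuous_intros)
  hence "(\<lambda>N. S (r N)) \<longlonglongrightarrow> S 1"
    by (rule continuous_on_tendsto_compose[OF _ r1]) (use r0 rle in auto)
  thus ?thesis unfolding S_def by simp
qed

lemma log_series_cis:
  fixes r x :: real
  assumes r: "0 \<le> r" "r < 1"
  shows "(\<lambda>k. r ^ Suc k * cos (real (Suc k) * x) / real (Suc k)) sums (- ln (cmod (1 - complex_of_real r * cis x)))"
proof -
  define z where "z = complex_of_real r * cis x"
  have nz: "norm z = r" unfolding z_def using r by (simp add: norm_mult)
  have "(\<lambda>n. - ((- (- z)) ^ n) / of_nat n) sums ln (1 + (- z))"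
    by (rule Ln_series') (use nz r in simp)
  hence "(\<lambda>n. Re (- ((- (- z)) ^ n) / of_nat n)) sums Re (ln (1 + (- z)))"
    by (rule sums_Re)
  moreover have "(\<lambda>n. Re (- ((- (- z)) ^ n) / of_nat n)) = (\<lambda>n. - (r ^ n * cos (real n * x) / real n))"
  proof
    fix n
    have "Re (z ^ n) = r ^ n * cos (real n * x)"
      unfolding z_def by (simp add: power_mult_distrib Complex.DeMoivre)
    thus "Re (- ((- (- z)) ^ n) / of_nat n) = - (r ^ n * cos (real n * x) / real n)"
      by (simp add: Re_divide_of_nat)
  qed
  moreover have "1 - z \<noteq> 0"
  proof
    assume "1 - z = 0" hence "norm z = 1" by simp
    with nz r show False by simp
  qed
  hence "Re (ln (1 + (- z))) = ln (cmod (1 - z))" by simp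
  ultimately have "(\<lambda>n. - (r ^ n * cos (real n * x) / real n)) sums ln (cmod (1 - z))" by (simp only:)
  hence "(\<lambda>n. r ^ n * cos (real n * x) / real n) sums (- ln (cmod (1 - z)))"
    using sums_minus by fastforce
  hence "(\<lambda>n. r ^ Suc n * cos (real (Suc n) * x) / real (Suc n)) sums (- ln (cmod (1 - z)) + 0)"
    by (subst sums_Suc_iff) simp
  thus ?thesis unfolding z_def by simp
qed

definition Lr :: "real \<Rightarrow> real \<Rightarrow> real" where
  "Lr r t = ln (cmod (1 - complex_of_real r * cis (2 * pi * t)))"

lemma Lr_integral:
  fixes r :: real
  assumes r: "0 \<le> r" "r < 1"
  shows "(\<lambda>k. r ^ Suc k * Icl b (2 * pi * real (Suc k)) / real (Suc k))
           sums integral {0..1} (\<lambda>t. - (t ^ b * Lr r t))"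
    and "(\<lambda>t. - (t ^ b * Lr r t)) integrable_on {0..1}"
proof -
  define u where "u k t = t ^ b * (r ^ Suc k * cos (real (Suc k) * (2 * pi * t)) / real (Suc k))" for k and t :: real
  define f where "f N t = (\<Sum>k<N. u k t)" for N t
  define M where "M = - ln (1 - r)"
  have lnser: "(\<lambda>k. r ^ Suc k / real (Suc k)) sums M" unfolding M_def by (rule neg_ln_series[OF r])
  have uint: "(u k has_integral (r ^ Suc k * Icl b (2 * pi * real (Suc k)) / real (Suc k))) {0..1}" for k
  proof -
    have "((\<lambda>t. (r ^ Suc k / real (Suc k)) * (t ^ b * cos (2 * pi * real (Suc k) * t))) has_integral
            ((r ^ Suc k / real (Suc k)) * Icl b (2 * pi * real (Suc k)))) {0..1}"
      by (intro has_integral_mult_right cos_int) simp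
    moreover have "(r ^ Suc k / real (Suc k)) * Icl b (2 * pi * real (Suc k)) = r ^ Suc k * Icl b (2 * pi * real (Suc k)) / real (Suc k)"
      by simp
    ultimately have I: "((\<lambda>t. (r ^ Suc k / real (Suc k)) * (t ^ b * cos (2 * pi * real (Suc k) * t))) has_integral
            (r ^ Suc k * Icl b (2 * pi * real (Suc k)) / real (Suc k))) {0..1}" by simp
    show ?thesis unfolding u_def by (rule has_integral_eq[OF _ I]) (simp add: mult_ac)
  qed
  have fint: "(f N has_integral (\<Sum>k<N. r ^ Suc k * Icl b (2 * pi * real (Suc k)) / real (Suc k))) {0..1}" for N
    unfolding f_def by (intro has_integral_sum uint) auto
  have bound: "norm (f N t) \<le> M" if t: "t \<in> {0..1}" for N t
  proof -
    have "norm (f N t) \<le> (\<Sum>k<N. norm (u k t))" unfolding f_def by (rule norm_sum)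
    also have "\<dots> \<le> (\<Sum>k<N. r ^ Suc k / real (Suc k))"
    proof (intro sum_mono)
      fix k
      have "\<bar>t ^ b\<bar> \<le> 1" using t by (simp add: power_le_one)
      moreover have "\<bar>cos (real (Suc k) * (2 * pi * t))\<bar> \<le> 1" by simp
      ultimately have "\<bar>t ^ b\<bar> * \<bar>cos (real (Suc k) * (2 * pi * t))\<bar> \<le> 1"
        by (simp add: mult_le_one)
      hence "\<bar>t ^ b\<bar> * \<bar>cos (real (Suc k) * (2 * pi * t))\<bar> * (r ^ Suc k / real (Suc k)) \<le> 1 * (r ^ Suc k / real (Suc k))"
        by (intro mult_right_mono) (use r in auto)
      thus "norm (u k t) \<le> r ^ Suc k / real (Suc k)"
        unfolding u_def using r by (simp add: abs_mult mult_ac)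
    qed
    also have "\<dots> \<le> M"
      using sum_le_suminf[OF sums_summable[OF lnser], of "{..<N}"] sums_unique[OF lnser] r by simp
    finally show ?thesis .
  qed
  have conv: "(\<lambda>N. f N t) \<longlonglongrightarrow> - (t ^ b * Lr r t)" if "t \<in> {0..1}" for t
  proof -
    have "(\<lambda>k. t ^ b * (r ^ Suc k * cos (real (Suc k) * (2 * pi * t)) / real (Suc k))) sums (t ^ b * (- Lr r t))"
      unfolding Lr_def by (rule sums_mult[OF log_series_cis[OF r]])
    thus ?thesis unfolding f_def u_def sums_def by simp
  qed
  have dc: "(\<lambda>t. - (t ^ b * Lr r t)) integrable_on {0..1}"
      "(\<lambda>N. integral {0..1} (f N)) \<longlonglongrightarrow> integral {0..1} (\<lambda>t. - (t ^ b * Lr r t))"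
    by (rule dominated_convergence[where h = "\<lambda>_. M", OF _ _ bound conv];
        use fint in \<open>auto simp: integrable_on_def\<close>)+
  show "(\<lambda>t. - (t ^ b * Lr r t)) integrable_on {0..1}" by (rule dc(1))
  have "(\<lambda>N. integral {0..1} (f N)) = (\<lambda>N. \<Sum>k<N. r ^ Suc k * Icl b (2 * pi * real (Suc k)) / real (Suc k))"
    using fint by (auto intro!: ext integral_unique)
  with dc(2) show "(\<lambda>k. r ^ Suc k * Icl b (2 * pi * real (Suc k)) / real (Suc k))
           sums integral {0..1} (\<lambda>t. - (t ^ b * Lr r t))" by (simp add: sums_def)
qed

lemma cmod_1_cis_sq: "cmod (1 - complex_of_real r * cis x) ^ 2 = (1 - r) ^ 2 + 2 * r * (1 - cos x)"
proof -
  have "cmod (1 - complex_of_real r * cis x) ^ 2 = (1 - r * cos x) ^ 2 + (r * sin x) ^ 2"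
    by (simp add: cmod_power2)
  also have "\<dots> = (1 - r) ^ 2 + 2 * r * (1 - cos x)"
    unfolding power_mult_distrib sin_squared_eq by (simp add: power2_eq_square algebra_simps)
  finally show ?thesis .
qed

lemma one_minus_cos_2pit: "1 - cos (2 * pi * t) = 2 * sin (pi * t) ^ 2"
  using cos_double_sin[of "pi * t"] by (simp add: mult_ac)

lemma cmod_1_cis: assumes "0 \<le> t" "t \<le> 1"
  shows "cmod (1 - complex_of_real 1 * cis (2 * pi * t)) = 2 * sin (pi * t)"
proof -
  have s: "sin (pi * t) \<ge> 0" using assms by (intro sin_ge_zero) auto
  have "cmod (1 - complex_of_real 1 * cis (2 * pi * t)) ^ 2 = (2 * sin (pi * t)) ^ 2"
    unfolding cmod_1_cis_sq one_minus_cos_2pit by (simp add: power2_eq_square)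
  thus ?thesis using s by (subst (asm) power2_eq_iff_nonneg) auto
qed

lemma cmod_lower: assumes "1/2 \<le> r" "0 \<le> t" "t \<le> 1"
  shows "sin (pi * t) \<le> cmod (1 - complex_of_real r * cis (2 * pi * t))"
proof -
  have s: "sin (pi * t) \<ge> 0" using assms by (intro sin_ge_zero) auto
  have "sin (pi * t) ^ 2 \<le> 2 * r * (2 * sin (pi * t) ^ 2)"
  proof -
    have "sin (pi * t) ^ 2 * 1 \<le> sin (pi * t) ^ 2 * (4 * r)" using assms
      by (intro mult_left_mono) auto
    thus ?thesis by (simp add: algebra_simps)
  qed
  also have "\<dots> \<le> cmod (1 - complex_of_real r * cis (2 * pi * t)) ^ 2"
    unfolding cmod_1_cis_sq one_minus_cos_2pit by simp
  finally show ?thesis using s by (metis norm_ge_zero power2_le_imp_le)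
qed

lemma cmod_upper: assumes "0 \<le> r" "r \<le> 1"
  shows "cmod (1 - complex_of_real r * cis (2 * pi * t)) \<le> 2"
proof -
  have "cmod (1 - complex_of_real r * cis (2 * pi * t)) \<le> cmod 1 + cmod (complex_of_real r * cis (2 * pi * t))"
    by (rule norm_triangle_ineq4)
  also have "\<dots> \<le> 2" using assms by (simp add: norm_mult)
  finally show ?thesis .
qed

lemma h_integrable: "(\<lambda>t. ln 2 - ln (sin (pi * t))) integrable_on {0<..<1}"
proof -
  have g0: "(\<lambda>t::real. t ^ 0 * (ln (pi * t) - ln (sin (pi * t)))) integrable_on {0..1}"
    using F_series(1)[of 0] by simp
  have l0: "(\<lambda>t::real. t ^ 0 * ln t) integrable_on {0..1}"
    using pow_ln_has_integral01[of 0] by (auto simp: integrable_on_def)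
  have "(\<lambda>t. (ln 2 - ln pi) + (t ^ 0 * (ln (pi * t) - ln (sin (pi * t))) - t ^ 0 * ln t)) integrable_on {0..1}"
    by (intro integrable_add integrable_diff g0 l0 integrable_const_ivl)
  hence "(\<lambda>t. (ln 2 - ln pi) + (t ^ 0 * (ln (pi * t) - ln (sin (pi * t))) - t ^ 0 * ln t)) integrable_on {0<..<1}"
    by (simp add: integrable_on_open_interval_real)
  thus ?thesis
    by (rule integrable_eq) (auto simp: ln_mult)
qed

lemma Lr_bound:
  assumes r: "1/2 \<le> r" "r \<le> 1" and t: "0 < t" "t < 1"
  shows "\<bar>t ^ b * Lr r t\<bar> \<le> ln 2 - ln (sin (pi * t))"
proof -
  have sp: "sin (pi * t) > 0" using t by (intro sin_gt_zero) auto
  have s1: "sin (pi * t) \<le> 1" by simp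
  have lsin: "ln (sin (pi * t)) \<le> 0" using sp s1 by simp
  have low: "sin (pi * t) \<le> cmod (1 - complex_of_real r * cis (2 * pi * t))"
    by (rule cmod_lower) (use r t in auto)
  have up: "cmod (1 - complex_of_real r * cis (2 * pi * t)) \<le> 2"
    by (rule cmod_upper) (use r in auto)
  have "Lr r t \<le> ln 2" unfolding Lr_def using low sp up by (subst ln_le_cancel_iff) auto
  moreover have "ln (sin (pi * t)) \<le> Lr r t" unfolding Lr_def using low sp by (subst ln_le_cancel_iff) auto
  moreover have "ln 2 \<ge> (0::real)" by simp
  ultimately have L: "\<bar>Lr r t\<bar> \<le> ln 2 - ln (sin (pi * t))" using lsin unfolding abs_le_iff by linarith
  have "\<bar>t ^ b\<bar> \<le> 1" using t by (simp add: power_le_one)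
  hence "\<bar>t ^ b\<bar> * \<bar>Lr r t\<bar> \<le> 1 * \<bar>Lr r t\<bar>" by (intro mult_right_mono) auto
  thus ?thesis using L by (simp add: abs_mult)
qed

lemma aux_div: "(e::real) / (X * n) ^ m / n = e / X ^ m * (1 / n ^ (m + 1))"
  by (simp add: power_mult_distrib mult_ac)

lemma Icl_sums:
  "(\<lambda>k. Icl b (2 * pi * real (Suc k)) / real (Suc k)) sums
     (\<Sum>j<b div 2. ecoef b (Suc j) / (2 * pi) ^ (2 * Suc j) * zeta (real (2 * Suc j + 1)))"
  "summable (\<lambda>k. \<bar>Icl b (2 * pi * real (Suc k)) / real (Suc k)\<bar>)"
proof -
  have eq: "Icl b (2 * pi * real (Suc k)) / real (Suc k) =
        (\<Sum>j<b div 2. ecoef b (Suc j) / (2 * pi) ^ (2 * Suc j) * (1 / real (Suc k) ^ (2 * Suc j + 1)))" for k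
    unfolding Icl_def sum_divide_distrib
    by (intro sum.cong refl) (rule aux_div)
  have zs: "(\<lambda>k. ecoef b (Suc j) / (2 * pi) ^ (2 * Suc j) * (1 / real (Suc k) ^ (2 * Suc j + 1))) sums
              (ecoef b (Suc j) / (2 * pi) ^ (2 * Suc j) * zeta (real (2 * Suc j + 1)))" for j
    by (intro sums_mult zeta_sums) simp
  show "(\<lambda>k. Icl b (2 * pi * real (Suc k)) / real (Suc k)) sums
     (\<Sum>j<b div 2. ecoef b (Suc j) / (2 * pi) ^ (2 * Suc j) * zeta (real (2 * Suc j + 1)))"
    unfolding eq by (rule sums_sum) (use zs in auto)
  have zs': "(\<lambda>k. \<bar>ecoef b (Suc j) / (2 * pi) ^ (2 * Suc j)\<bar> * (1 / real (Suc k) ^ (2 * Suc j + 1))) sums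
              (\<bar>ecoef b (Suc j) / (2 * pi) ^ (2 * Suc j)\<bar> * zeta (real (2 * Suc j + 1)))" for j
    by (intro sums_mult zeta_sums) simp
  have S: "summable (\<lambda>k. \<Sum>j<b div 2. \<bar>ecoef b (Suc j) / (2 * pi) ^ (2 * Suc j)\<bar> * (1 / real (Suc k) ^ (2 * Suc j + 1)))"
    by (rule sums_summable[OF sums_sum]) (use zs' in auto)
  show "summable (\<lambda>k. \<bar>Icl b (2 * pi * real (Suc k)) / real (Suc k)\<bar>)"
  proof (rule summable_comparison_test[OF _ S], intro exI allI impI)
    fix k
    have "\<bar>Icl b (2 * pi * real (Suc k)) / real (Suc k)\<bar> \<le>
          (\<Sum>j<b div 2. \<bar>ecoef b (Suc j) / (2 * pi) ^ (2 * Suc j) * (1 / real (Suc k) ^ (2 * Suc j + 1))\<bar>)"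
      unfolding eq by (rule sum_abs)
    also have "\<dots> = (\<Sum>j<b div 2. \<bar>ecoef b (Suc j) / (2 * pi) ^ (2 * Suc j)\<bar> * (1 / real (Suc k) ^ (2 * Suc j + 1)))"
      by (intro sum.cong refl) (simp add: abs_mult)
    finally show "norm \<bar>Icl b (2 * pi * real (Suc k)) / real (Suc k)\<bar> \<le> \<dots>" by simp
  qed
qed

lemma logsin_fourier:
  shows "(\<lambda>t. t ^ b * ln (2 * sin (pi * t))) integrable_on {0..1}"
    and "integral {0..1} (\<lambda>t. t ^ b * ln (2 * sin (pi * t))) =
           - (\<Sum>k. Icl b (2 * pi * real (Suc k)) / real (Suc k))"
proof -
  define r where "r N = 1 - 1 / (real N + 2)" for N
  define a where "a k = Icl b (2 * pi * real (Suc k)) / real (Suc k)" for k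
  have r12: "1/2 \<le> r N" "r N < 1" "0 \<le> r N" "r N \<le> 1" for N
    unfolding r_def by (auto simp: field_simps)
  have rlim: "r \<longlonglongrightarrow> 1" unfolding r_def by real_asymp
  define f where "f N t = - (t ^ b * Lr (r N) t)" for N t
  define g where "g t = - (t ^ b * ln (2 * sin (pi * t)))" for t
  have fint: "f N integrable_on {0<..<1}" for N
    unfolding f_def using Lr_integral(2)[OF r12(3)[of N] r12(2)[of N], of b]
    by (simp add: integrable_on_open_interval_real)
  have bound: "norm (f N t) \<le> ln 2 - ln (sin (pi * t))" if "t \<in> {0<..<1}" for N t
    unfolding f_def using Lr_bound[OF r12(1)[of N] r12(4)[of N], of t b] that by simp
  have conv: "(\<lambda>N. f N t) \<longlonglongrightarrow> g t" if "t \<in> {0<..<1}" for t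
  proof -
    have t: "0 \<le> t" "t \<le> 1" using that by auto
    have sp: "sin (pi * t) > 0" using that by (intro sin_gt_zero) auto
    have "(\<lambda>N. cmod (1 - complex_of_real (r N) * cis (2 * pi * t))) \<longlonglongrightarrow>
            cmod (1 - complex_of_real 1 * cis (2 * pi * t))"
      by (intro tendsto_intros rlim)
    hence "(\<lambda>N. cmod (1 - complex_of_real (r N) * cis (2 * pi * t))) \<longlonglongrightarrow> 2 * sin (pi * t)"
      using cmod_1_cis[OF t] by simp
    hence "(\<lambda>N. Lr (r N) t) \<longlonglongrightarrow> ln (2 * sin (pi * t))"
      unfolding Lr_def by (rule tendsto_ln) (use sp in simp)
    thus ?thesis unfolding f_def g_def by (intro tendsto_intros)
  qed
  have dc: "g integrable_on {0<..<1}" "(\<lambda>N. integral {0<..<1} (f N)) \<longlonglongrightarrow> integral {0<..<1} g"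
    by (rule dominated_convergence[OF fint h_integrable bound conv]; simp)+
  have gi: "g integrable_on {0..1}" using dc(1) by (simp add: integrable_on_open_interval_real)
  have lim1: "(\<lambda>N. integral {0..1} (f N)) \<longlonglongrightarrow> integral {0..1} g"
    using dc(2) by (simp add: integral_open_interval_real)
  have "(\<lambda>N. \<Sum>k. r N ^ Suc k * a k) \<longlonglongrightarrow> (\<Sum>k. a k)"
    unfolding a_def by (rule abel_lim[OF Icl_sums(2) rlim r12(3) r12(4)])
  moreover have "(\<Sum>k. r N ^ Suc k * a k) = integral {0..1} (f N)" for N
  proof -
    have "(\<lambda>k. r N ^ Suc k * Icl b (2 * pi * real (Suc k)) / real (Suc k)) sums integral {0..1} (f N)"
      unfolding f_def by (rule Lr_integral(1)[OF r12(3) r12(2)])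
    thus ?thesis unfolding a_def by (simp add: sums_iff)
  qed
  ultimately have "(\<lambda>N. integral {0..1} (f N)) \<longlonglongrightarrow> (\<Sum>k. a k)" by simp
  hence eqg: "integral {0..1} g = (\<Sum>k. a k)" using lim1 LIMSEQ_unique by blast
  have ni: "(\<lambda>t. - g t) integrable_on {0..1}" using integrable_neg[OF gi] .
  thus "(\<lambda>t. t ^ b * ln (2 * sin (pi * t))) integrable_on {0..1}" unfolding g_def by simp
  have "integral {0..1} (\<lambda>t. - g t) = - integral {0..1} g" by (rule integral_neg)
  thus "integral {0..1} (\<lambda>t. t ^ b * ln (2 * sin (pi * t))) =
           - (\<Sum>k. Icl b (2 * pi * real (Suc k)) / real (Suc k))"
    unfolding g_def using eqg unfolding a_def g_def by simp
qed

lemma sum_shift1: "(\<Sum>j=1..K. h j) = (\<Sum>j<K. h (Suc j))"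
  by (induction K) auto

lemma F_closed:
  fixes b :: nat
  shows "(\<lambda>k. zeta (2 * real (Suc k)) / (real (Suc k) * (2 * real (Suc k) + real (Suc b))))
    sums (ln (2 * pi) / real (Suc b) - 1 / real (Suc b) ^ 2
          - fact b * (\<Sum>j = 1..b div 2. (-1) ^ j * zeta (2 * real j + 1)
                                     / (fact (Suc b - 2 * j) * (2 * pi) ^ (2 * j))))"
proof -
  define g where "g = (\<lambda>t::real. t ^ b * (ln (pi * t) - ln (sin (pi * t))))"
  define LS where "LS = integral {0..1} (\<lambda>t. t ^ b * ln (2 * sin (pi * t)))"
  have i1: "((\<lambda>t::real. ln (2 * pi) * t ^ b) has_integral (ln (2 * pi) * (1 / real (Suc b)))) {0..1}"
    by (intro has_integral_mult_right power_has_integral01)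
  have i2: "((\<lambda>t::real. t ^ b * ln t) has_integral (- 1 / real (Suc b) ^ 2)) {0..1}"
    by (rule pow_ln_has_integral01)
  have i3: "((\<lambda>t. t ^ b * ln (2 * sin (pi * t))) has_integral LS) {0..1}"
    unfolding LS_def using logsin_fourier(1) by (rule integrable_integral)
  have "((\<lambda>t. ln (2 * pi) * t ^ b + t ^ b * ln t - t ^ b * ln (2 * sin (pi * t))) has_integral
          (ln (2 * pi) * (1 / real (Suc b)) + - 1 / real (Suc b) ^ 2 - LS)) {0..1}"
    by (intro has_integral_diff has_integral_add i1 i2 i3)
  hence "((\<lambda>t. ln (2 * pi) * t ^ b + t ^ b * ln t - t ^ b * ln (2 * sin (pi * t))) has_integral
          (ln (2 * pi) * (1 / real (Suc b)) + - 1 / real (Suc b) ^ 2 - LS)) {0<..<1}"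
    by (simp add: has_integral_Icc_iff_Ioo)
  hence "(g has_integral (ln (2 * pi) * (1 / real (Suc b)) + - 1 / real (Suc b) ^ 2 - LS)) {0<..<1}"
  proof (rule has_integral_eq[rotated])
    fix t :: real assume t: "t \<in> {0<..<1}"
    have sp: "sin (pi * t) > 0" using t by (intro sin_gt_zero) auto
    have E: "ln (pi * t) - ln (sin (pi * t)) = ln (2 * pi) + ln t - ln (2 * sin (pi * t))"
      using t sp by (simp add: ln_mult)
    show "ln (2 * pi) * t ^ b + t ^ b * ln t - t ^ b * ln (2 * sin (pi * t)) = g t"
      unfolding g_def E by (simp add: algebra_simps)
  qed
  hence "integral {0..1} g = ln (2 * pi) / real (Suc b) - 1 / real (Suc b) ^ 2 - LS"
    by (simp add: has_integral_Icc_iff_Ioo[symmetric] integral_unique)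
  moreover have "LS = fact b * (\<Sum>j = 1..b div 2. (-1) ^ j * zeta (2 * real j + 1)
                                     / (fact (Suc b - 2 * j) * (2 * pi) ^ (2 * j)))"
  proof -
    have "LS = - (\<Sum>j<b div 2. ecoef b (Suc j) / (2 * pi) ^ (2 * Suc j) * zeta (real (2 * Suc j + 1)))"
      unfolding LS_def logsin_fourier(2) using sums_unique[OF Icl_sums(1)] by simp
    also have "\<dots> = (\<Sum>j<b div 2. fact b * ((-1) ^ Suc j * zeta (2 * real (Suc j) + 1)
                                     / (fact (Suc b - 2 * Suc j) * (2 * pi) ^ (2 * Suc j))))"
      unfolding sum_negf[symmetric]
    proof (intro sum.cong refl)
      fix j assume "j \<in> {..<b div 2}"
      show "- (ecoef b (Suc j) / (2 * pi) ^ (2 * Suc j) * zeta (real (2 * Suc j + 1))) =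
         fact b * ((-1) ^ Suc j * zeta (2 * real (Suc j) + 1) / (fact (Suc b - 2 * Suc j) * (2 * pi) ^ (2 * Suc j)))"
        unfolding ecoef_def by (simp add: field_simps)
    qed
    also have "\<dots> = fact b * (\<Sum>j = 1..b div 2. (-1) ^ j * zeta (2 * real j + 1)
                                     / (fact (Suc b - 2 * j) * (2 * pi) ^ (2 * j)))"
      unfolding sum_shift1 sum_distrib_left ..
    finally show ?thesis .
  qed
  ultimately show ?thesis using F_series(2)[of b] unfolding g_def by simp
qed

lemma F_closed':
  assumes "a \<ge> 1"
  shows "(\<lambda>k. zeta (2 * real (Suc k)) / (real (Suc k) * (2 * real (Suc k) + real a)))
    sums (ln (2 * pi) / real a - 1 / real a ^ 2
          - fact (a - 1) * (\<Sum>j = 1..(a - 1) div 2. (-1) ^ j * zeta (2 * real j + 1)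
                                     / (fact (a - 2 * j) * (2 * pi) ^ (2 * j))))"
proof -
  have a: "Suc (a - 1) = a" using assms by simp
  show ?thesis using F_closed[of "a - 1"] unfolding a .
qed

lemma final_alg:
  fixes M N L A B Tm Sn z s :: real
  assumes "M \<noteq> N" "M \<noteq> 0" "N \<noteq> 0"
  shows "((L / N - 1 / N^2 - B * Sn) - (L / M - 1 / M^2 - A * Tm)) / (M - N) =
         - ((M + N) / (M * N)^2) + L / (M * N) - s * A / (M - N) * z + 1 / (M - N) * (A * (Tm + s * z) - B * Sn)"
proof -
  have d: "M - N \<noteq> 0" using assms by simp
  have 1: "(L / N - L / M) / (M - N) = L / (M * N)" using assms d by (simp add: field_simps)
  have 2: "(1 / M^2 - 1 / N^2) / (M - N) = - ((M + N) / (M * N)^2)"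
  proof -
    have "1 / M^2 - 1 / N^2 = - (M - N) * (M + N) / (M * N)^2"
      using assms by (simp add: field_simps power2_eq_square)
    moreover have "(- (M - N) * (M + N) / X) / (M - N) = - ((M + N) / X)" for X
      using d by (cases "X = 0") (simp_all add: field_simps)
    ultimately show ?thesis by simp
  qed
  have 3: "- s * A / (M - N) * z + 1 / (M - N) * (A * (Tm + s * z) - B * Sn) = (A * Tm - B * Sn) / (M - N)"
  proof -
    have "- s * A / (M - N) * z + 1 / (M - N) * (A * (Tm + s * z) - B * Sn) =
          (- s * A * z + (A * (Tm + s * z) - B * Sn)) / (M - N)"
      by (simp add: add_divide_distrib diff_divide_distrib)
    also have "- s * A * z + (A * (Tm + s * z) - B * Sn) = A * Tm - B * Sn"
      by (simp add: algebra_simps)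
    finally show ?thesis .
  qed
  have 4: "(L / N - 1 / N^2 - B * Sn) - (L / M - 1 / M^2 - A * Tm) =
           (L / N - L / M) + (1 / M^2 - 1 / N^2) + (A * Tm - B * Sn)" by simp
  have "((L / N - 1 / N^2 - B * Sn) - (L / M - 1 / M^2 - A * Tm)) / (M - N) =
        (L / N - L / M) / (M - N) + (1 / M^2 - 1 / N^2) / (M - N) + (A * Tm - B * Sn) / (M - N)"
    unfolding 4 by (simp add: add_divide_distrib)
  also have "\<dots> = L / (M * N) - ((M + N) / (M * N)^2) + (- s * A / (M - N) * z + 1 / (M - N) * (A * (Tm + s * z) - B * Sn))"
    unfolding 1 2 3 by simp
  finally show ?thesis by simp
qed

lemma pf_alg:
  fixes Z K M N :: real
  assumes "K \<noteq> 0" "2 * K + M \<noteq> 0" "2 * K + N \<noteq> 0" "M - N \<noteq> 0"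
  shows "(Z / (K * (2 * K + N)) - Z / (K * (2 * K + M))) / (M - N) = Z / (K * (2 * K + M) * (2 * K + N))"
proof -
  have gen: "Z / (K * B) - Z / (K * A) = Z * (A - B) / (K * A * B)" if "A \<noteq> 0" "B \<noteq> 0" for A B
    using that assms(1) by (simp add: field_simps)
  have "Z / (K * (2 * K + N)) - Z / (K * (2 * K + M)) = Z * (M - N) / (K * (2 * K + M) * (2 * K + N))"
    using gen[OF assms(2,3)] by simp
  thus ?thesis using assms by simp
qed

theorem corollary22:
  fixes m n :: nat
  assumes "m > 0" "even m" "n > 0" "odd n"
  shows "(\<lambda>k. let k' = real (Suc k) in complex_of_real (zeta (2 * k') /
              (k' * (2 * k' + real m) * (2 * k' + real n))))
         sums
         (- complex_of_real ((real m + real n) / (real m * real n)^2)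
          + complex_of_real (ln (2 * pi) / (real m * real n))
          - \<i> ^ m * of_nat (fact (m - 1)) / (of_nat m - of_nat n)
              * complex_of_real (zeta (real m + 1) / (2 * pi) ^ m)
          + 1 / (of_nat m - of_nat n) *
              complex_of_real (
                 fact (m - 1) * (\<Sum>j = 1..m div 2. (-1) ^ j * zeta (2 * real j + 1)
                                     / (fact (m - 2 * j) * (2 * pi) ^ (2 * j)))
               - fact (n - 1) * (\<Sum>j = 1..(n - 1) div 2. (-1) ^ j * zeta (2 * real j + 1)
                                     / (fact (n - 2 * j) * (2 * pi) ^ (2 * j)))))"
proof -
  from assms obtain p where p: "m = 2 * p" "p \<ge> 1" by (auto elim!: evenE)
  have mn: "m \<noteq> n" using assms by auto
  define Tm where "Tm = (\<Sum>j = 1..(m - 1) div 2. (-1) ^ j * zeta (2 * real j + 1)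
                                     / (fact (m - 2 * j) * (2 * pi) ^ (2 * j)))"
  define Sm where "Sm = (\<Sum>j = 1..m div 2. (-1) ^ j * zeta (2 * real j + 1)
                                     / (fact (m - 2 * j) * (2 * pi) ^ (2 * j)))"
  define Sn where "Sn = (\<Sum>j = 1..(n - 1) div 2. (-1) ^ j * zeta (2 * real j + 1)
                                     / (fact (n - 2 * j) * (2 * pi) ^ (2 * j)))"
  define z where "z = zeta (real m + 1) / (2 * pi) ^ m"
  define s :: real where "s = (-1) ^ p"
  define Fm where "Fm = ln (2 * pi) / real m - 1 / real m ^ 2 - fact (m - 1) * Tm"
  define Fn where "Fn = ln (2 * pi) / real n - 1 / real n ^ 2 - fact (n - 1) * Sn"
  have sm: "(\<lambda>k. zeta (2 * real (Suc k)) / (real (Suc k) * (2 * real (Suc k) + real m))) sums Fm"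
    unfolding Fm_def Tm_def by (rule F_closed') (use assms in auto)
  have sn: "(\<lambda>k. zeta (2 * real (Suc k)) / (real (Suc k) * (2 * real (Suc k) + real n))) sums Fn"
    unfolding Fn_def Sn_def by (rule F_closed') (use assms in auto)
  have dmn: "real m - real n \<noteq> 0" using mn by simp
  have "(\<lambda>k. (zeta (2 * real (Suc k)) / (real (Suc k) * (2 * real (Suc k) + real n)) -
              zeta (2 * real (Suc k)) / (real (Suc k) * (2 * real (Suc k) + real m))) / (real m - real n))
        sums ((Fn - Fm) / (real m - real n))"
    by (intro sums_divide sums_diff sn sm)
  moreover have "(zeta (2 * real (Suc k)) / (real (Suc k) * (2 * real (Suc k) + real n)) -
              zeta (2 * real (Suc k)) / (real (Suc k) * (2 * real (Suc k) + real m))) / (real m - real n)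
        = (let k' = real (Suc k) in zeta (2 * k') / (k' * (2 * k' + real m) * (2 * k' + real n)))" for k
  proof -
    have a: "real (Suc k) > 0" "2 * real (Suc k) + real m > 0" "2 * real (Suc k) + real n > 0" by auto
    show ?thesis unfolding Let_def by (rule pf_alg) (use a dmn in auto)
  qed
  ultimately have R: "(\<lambda>k. let k' = real (Suc k) in zeta (2 * k') / (k' * (2 * k' + real m) * (2 * k' + real n)))
        sums ((Fn - Fm) / (real m - real n))" by simp
  have C: "(\<lambda>k. let k' = real (Suc k) in complex_of_real (zeta (2 * k') / (k' * (2 * k' + real m) * (2 * k' + real n))))
        sums complex_of_real ((Fn - Fm) / (real m - real n))"
    using sums_of_real[OF R] by (simp only: Let_def)
  have Sm_eq: "Sm = Tm + s * z"
  proof -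
    obtain p' where p': "p = Suc p'" using p by (cases p) auto
    have md: "m div 2 = Suc p'" "(m - 1) div 2 = p'" using p p' by auto
    have "Sm = Tm + (-1) ^ Suc p' * zeta (2 * real (Suc p') + 1) / (fact (m - 2 * Suc p') * (2 * pi) ^ (2 * Suc p'))"
      unfolding Sm_def Tm_def md by (subst sum.cl_ivl_Suc) simp
    also have "m - 2 * Suc p' = 0" using p p' by simp
    finally show ?thesis unfolding s_def z_def using p p' by (simp add: mult_ac)
  qed
  have real_eq: "(Fn - Fm) / (real m - real n) =
      - ((real m + real n) / (real m * real n)^2) + ln (2 * pi) / (real m * real n)
      - s * fact (m - 1) / (real m - real n) * z + 1 / (real m - real n) * (fact (m - 1) * Sm - fact (n - 1) * Sn)"
    unfolding Fm_def Fn_def Sm_eq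
    by (rule final_alg) (use mn assms in auto)
  have im: "\<i> ^ m = complex_of_real s" unfolding p s_def by (simp add: power_mult)
  have "complex_of_real ((Fn - Fm) / (real m - real n)) =
         (- complex_of_real ((real m + real n) / (real m * real n)^2)
          + complex_of_real (ln (2 * pi) / (real m * real n))
          - \<i> ^ m * of_nat (fact (m - 1)) / (of_nat m - of_nat n)
              * complex_of_real z
          + 1 / (of_nat m - of_nat n) *
              complex_of_real (fact (m - 1) * Sm - fact (n - 1) * Sn))"
    unfolding real_eq im by simp
  with C show ?thesis unfolding z_def Sm_def Sn_def by simp
qed

end
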